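(* Let $a=(a_k)_{k=0}^{d-1}\in\mathbb C^d$. Then for every $t\in(0,1)$ there exists at least one $n\in\{0,1,\dots,d-1\}$ such that $|a_n|\ge\|a\|_1\,t^{d-n}(t^{-1}-1)$.
   Context: $\|a\|_1=\sum_{k=0}^{d-1}|a_k|$. *)

theory Defs
  imports Complex_Main
begin

definition norm1 :: "nat \<Rightarrow> (nat \<Rightarrow> complex) \<Rightarrow> real" where
  "norm1 d a = (\<Sum>k<d. cmod (a k))"

end

theory Submission
  imports Defs
begin

lemma geo_aux:
  fixes t :: real assumes "0 < t"
  shows "(\<Sum>n<d. t ^ (d - n)) * (1 / t - 1) = 1 - t ^ d"
proof (induction d)
  case 0 then show ?case by simp
next
  case (Suc d)
  have "(\<Sum>n<Suc d. t ^ (Suc d - n)) = t * (\<Sum>n<d. t ^ (d - n)) + t"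
    by (simp add: sum_distrib_left Suc_diff_le power_Suc[symmetric] del: power_Suc)
  then have "(\<Sum>n<Suc d. t ^ (Suc d - n)) * (1 / t - 1)
      = t * ((\<Sum>n<d. t ^ (d - n)) * (1 / t - 1)) + t * (1/t - 1)"
    by (simp add: algebra_simps)
  also have "\<dots> = t * (1 - t^d) + (1 - t)" using Suc.IH assms by (simp add: right_diff_distrib)
  finally show ?case by (simp add: algebra_simps)
qed

theorem mainTheorem7:
  fixes d :: nat and a :: "nat \<Rightarrow> complex" and t :: real
  assumes "d \<ge> 1" and "0 < t" and "t < 1"
  shows "\<exists>n<d. cmod (a n) \<ge> norm1 d a * t ^ (d - n) * (1 / t - 1)"
proof (rule ccontr)
  assume H: "\<not> ?thesis"
  let ?S = "norm1 d a"
  have lt: "\<And>n. n < d \<Longrightarrow> cmod (a n) < ?S * t ^ (d - n) * (1 / t - 1)"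
    using H by force
  have "?S = (\<Sum>n<d. cmod (a n))" by (simp add: norm1_def)
  also have "\<dots> < (\<Sum>n<d. ?S * t ^ (d - n) * (1 / t - 1))"
    using assms(1) by (intro sum_strict_mono) (auto intro: lt simp: lessThan_empty_iff)
  also have "\<dots> = ?S * ((\<Sum>n<d. t ^ (d - n)) * (1 / t - 1))"
    by (simp add: sum_distrib_left sum_distrib_right algebra_simps)
  also have "\<dots> = ?S * (1 - t ^ d)" using geo_aux[OF assms(2)] by simp
  finally have A: "?S < ?S * (1 - t ^ d)" .
  have "?S \<ge> 0" by (simp add: norm1_def sum_nonneg)
  moreover have "t ^ d > 0" using assms by simp
  ultimately have "?S * (1 - t^d) \<le> ?S" by (simp add: mult_left_le)
  with A show False by simp
qed

end
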